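(* Let $X$ be an $\omega$ type $P$-space. Then $\Sigma\mathcal O(X)$ is sober.
   Context: $\mathcal O(X)$ is the lattice of open subsets of $X$ ordered by inclusion, and $\Sigma\mathcal O(X)$ is this lattice with its Scott topology (a set $U$ is Scott open iff it is an upper set and for every directed $D$, $\bigvee D\in U$ implies $D\cap U\neq\emptyset$). A space is an $\omega$ type space if it has a subbase consisting of countable subsets; it is a $P$-space if countable intersections of open sets are open. A $T_0$ space is sober if every irreducible closed set equals $\overline{\{x\}}$ for some point $x$. *)

theory Defs
  imports "HOL-Analysis.Analysis"
begin

definition omega_type_space :: "'a topology \<Rightarrow> bool" where
  "omega_type_space X \<longleftrightarrow>
     (\<exists>S. X = topology_generated_by S \<and> (\<forall>s\<in>S. countable s))"

definition P_space :: "'a topology \<Rightarrow> bool" where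
  "P_space X \<longleftrightarrow>
     (\<forall>F. countable F \<and> F \<noteq> {} \<and> (\<forall>U\<in>F. openin X U) \<longrightarrow> openin X (\<Inter>F))"

definition directed_opens :: "'a topology \<Rightarrow> 'a set set \<Rightarrow> bool" where
  "directed_opens X D \<longleftrightarrow>
     D \<noteq> {} \<and> (\<forall>U\<in>D. openin X U) \<and>
     (\<forall>U\<in>D. \<forall>V\<in>D. \<exists>W\<in>D. U \<subseteq> W \<and> V \<subseteq> W)"

definition scott_open_opens :: "'a topology \<Rightarrow> 'a set set \<Rightarrow> bool" where
  "scott_open_opens X \<U> \<longleftrightarrow>
     \<U> \<subseteq> {U. openin X U} \<and>
     (\<forall>U V. U \<in> \<U> \<and> openin X V \<and> U \<subseteq> V \<longrightarrow> V \<in> \<U>) \<and>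
     (\<forall>D. directed_opens X D \<and> \<Union>D \<in> \<U> \<longrightarrow> D \<inter> \<U> \<noteq> {})"

definition Sigma_O :: "'a topology \<Rightarrow> 'a set topology" where
  "Sigma_O X = topology (scott_open_opens X)"

definition irreducible_closed :: "'a topology \<Rightarrow> 'a set \<Rightarrow> bool" where
  "irreducible_closed X C \<longleftrightarrow>
     closedin X C \<and> C \<noteq> {} \<and>
     (\<forall>A B. closedin X A \<and> closedin X B \<and> C \<subseteq> A \<union> B \<longrightarrow> C \<subseteq> A \<or> C \<subseteq> B)"

definition sober :: "'a topology \<Rightarrow> bool" where
  "sober X \<longleftrightarrow> t0_space X \<and>
     (\<forall>C. irreducible_closed X C \<longrightarrow> (\<exists>x\<in>topspace X. C = X closure_of {x}))"

end

theory Submission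
  imports Defs
begin

lemma scott_I:
  assumes "\<U> \<subseteq> {U. openin X U}"
    and "\<And>U V. U \<in> \<U> \<Longrightarrow> openin X V \<Longrightarrow> U \<subseteq> V \<Longrightarrow> V \<in> \<U>"
    and "\<And>D. directed_opens X D \<Longrightarrow> \<Union>D \<in> \<U> \<Longrightarrow> D \<inter> \<U> \<noteq> {}"
  shows "scott_open_opens X \<U>"
  using assms unfolding scott_open_opens_def by blast

lemma scott_D1: "scott_open_opens X \<U> \<Longrightarrow> U \<in> \<U> \<Longrightarrow> openin X U"
  unfolding scott_open_opens_def by blast

lemma scott_D2: "scott_open_opens X \<U> \<Longrightarrow> U \<in> \<U> \<Longrightarrow> openin X V \<Longrightarrow> U \<subseteq> V \<Longrightarrow> V \<in> \<U>"
  unfolding scott_open_opens_def by blast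

lemma scott_D3: "scott_open_opens X \<U> \<Longrightarrow> directed_opens X D \<Longrightarrow> \<Union>D \<in> \<U> \<Longrightarrow> \<exists>d\<in>D. d \<in> \<U>"
  unfolding scott_open_opens_def by blast

lemma scott_Int: 
  assumes S: "scott_open_opens X S" and T: "scott_open_opens X T"
  shows "scott_open_opens X (S \<inter> T)"
proof (rule scott_I)
  show "S \<inter> T \<subseteq> {U. openin X U}" using scott_D1[OF S] by blast
  fix U V assume "U \<in> S \<inter> T" "openin X V" "U \<subseteq> V"
  then show "V \<in> S \<inter> T" using scott_D2[OF S] scott_D2[OF T] by blast
next
  fix D assume D: "directed_opens X D" "\<Union> D \<in> S \<inter> T"
  obtain a where a: "a \<in> D" "a \<in> S" using scott_D3[OF S D(1)] D(2) by blast
  obtain b where b: "b \<in> D" "b \<in> T" using scott_D3[OF T D(1)] D(2) by blast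
  have "\<forall>U\<in>D. \<forall>V\<in>D. \<exists>W\<in>D. U \<subseteq> W \<and> V \<subseteq> W" and oD: "\<forall>U\<in>D. openin X U"
    using D(1) unfolding directed_opens_def by blast+
  then obtain W where W: "W \<in> D" "a \<subseteq> W" "b \<subseteq> W" using a b by blast
  have "openin X W" using oD W by blast
  then have "W \<in> S" "W \<in> T" using scott_D2[OF S a(2)] scott_D2[OF T b(2)] W by blast+
  then show "D \<inter> (S \<inter> T) \<noteq> {}" using W by blast
qed

lemma scott_Union: 
  assumes K: "\<And>S. S \<in> K \<Longrightarrow> scott_open_opens X S"
  shows "scott_open_opens X (\<Union>K)"
proof (rule scott_I)
  show "\<Union>K \<subseteq> {U. openin X U}" using scott_D1 K by blast
  fix U V assume "U \<in> \<Union>K" "openin X V" "U \<subseteq> V"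
  then show "V \<in> \<Union>K" using scott_D2 K by blast
next
  fix D assume D: "directed_opens X D" "\<Union> D \<in> \<Union>K"
  then obtain S where S: "S \<in> K" "\<Union>D \<in> S" by blast
  then obtain d where "d \<in> D" "d \<in> S" using scott_D3[OF K[OF S(1)] D(1)] by blast
  then show "D \<inter> \<Union>K \<noteq> {}" using S by blast
qed

lemma scott_istop: "istopology (scott_open_opens X)"
  unfolding istopology_def using scott_Int scott_Union by blast

lemma openin_Sigma: "openin (Sigma_O X) A \<longleftrightarrow> scott_open_opens X A"
  unfolding Sigma_O_def by (simp add: topology_inverse'[OF scott_istop])

lemma opens_scott: "scott_open_opens X {U. openin X U}"
proof (rule scott_I)
  fix D assume "directed_opens X D"
  then obtain d where "d \<in> D" "openin X d" unfolding directed_opens_def by fastforce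
  then show "D \<inter> {U. openin X U} \<noteq> {}" by blast
qed auto

lemma topspace_Sigma: "topspace (Sigma_O X) = {U. openin X U}"
proof
  show "topspace (Sigma_O X) \<subseteq> {U. openin X U}"
  proof
    fix U assume "U \<in> topspace (Sigma_O X)"
    then obtain S where "U \<in> S" "openin (Sigma_O X) S" unfolding topspace_def by blast
    then show "U \<in> {U. openin X U}" using scott_D1 openin_Sigma by blast
  qed
  show "{U. openin X U} \<subseteq> topspace (Sigma_O X)"
    using openin_subset[of "Sigma_O X" "{U. openin X U}"] openin_Sigma opens_scott by blast
qed

lemma notsub_scott: "scott_open_opens X {V. openin X V \<and> \<not> V \<subseteq> U}"
proof (rule scott_I)
  fix D assume "directed_opens X D" "\<Union>D \<in> {V. openin X V \<and> \<not> V \<subseteq> U}"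
  then obtain d where "d \<in> D" "openin X d" "\<not> d \<subseteq> U" unfolding directed_opens_def by blast
  then show "D \<inter> {V. openin X V \<and> \<not> V \<subseteq> U} \<noteq> {}" by blast
qed auto

lemma point_scott: "scott_open_opens X {V. openin X V \<and> x \<in> V}"
proof (rule scott_I)
  fix D assume "directed_opens X D" "\<Union>D \<in> {V. openin X V \<and> x \<in> V}"
  then obtain d where "d \<in> D" "openin X d" "x \<in> d" unfolding directed_opens_def by blast
  then show "D \<inter> {V. openin X V \<and> x \<in> V} \<noteq> {}" by blast
qed auto

lemma finite_scott: "finite F \<Longrightarrow> scott_open_opens X {V. openin X V \<and> F \<subseteq> V}"
proof (induction F rule: finite_induct)
  case empty
  then show ?case using opens_scott by simp
next
  case (insert x F)
  have e: "{V. openin X V \<and> insert x F \<subseteq> V} = {V. openin X V \<and> x \<in> V} \<inter> {V. openin X V \<and> F \<subseteq> V}"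
    by blast
  show ?case unfolding e by (rule scott_Int[OF point_scott insert.IH])
qed

lemma closure_single:
  assumes "openin X U"
  shows "Sigma_O X closure_of {U} = {V. openin X V \<and> V \<subseteq> U}"
proof
  show "Sigma_O X closure_of {U} \<subseteq> {V. openin X V \<and> V \<subseteq> U}"
  proof
    fix V assume V: "V \<in> Sigma_O X closure_of {U}"
    then have o: "openin X V" and cl: "\<And>T. V \<in> T \<Longrightarrow> openin (Sigma_O X) T \<Longrightarrow> U \<in> T"
      unfolding in_closure_of topspace_Sigma by auto
    have "V \<subseteq> U"
    proof (rule ccontr)
      assume "\<not> V \<subseteq> U"
      then have "V \<in> {W. openin X W \<and> \<not> W \<subseteq> U}" using o by simp
      moreover have "openin (Sigma_O X) {W. openin X W \<and> \<not> W \<subseteq> U}"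
        unfolding openin_Sigma by (rule notsub_scott)
      ultimately have "U \<in> {W. openin X W \<and> \<not> W \<subseteq> U}" by (rule cl)
      then show False by simp
    qed
    then show "V \<in> {V. openin X V \<and> V \<subseteq> U}" using o by simp
  qed
  show "{V. openin X V \<and> V \<subseteq> U} \<subseteq> Sigma_O X closure_of {U}"
  proof
    fix V assume V: "V \<in> {V. openin X V \<and> V \<subseteq> U}"
    have "U \<in> T" if "V \<in> T" "openin (Sigma_O X) T" for T
    proof -
      have "scott_open_opens X T" using that(2) by (simp add: openin_Sigma)
      then show ?thesis using scott_D2 V that assms by blast
    qed
    then show "V \<in> Sigma_O X closure_of {U}"
      unfolding in_closure_of topspace_Sigma using V by auto
  qed
qed

lemma alexandrov:
  assumes "omega_type_space X" and "P_space X" and "x \<in> topspace X"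
  shows "\<exists>M. openin X M \<and> x \<in> M \<and> (\<forall>V. openin X V \<and> x \<in> V \<longrightarrow> M \<subseteq> V)"
proof -
  obtain S where S: "X = topology_generated_by S" "\<forall>s\<in>S. countable s"
    using assms(1) unfolding omega_type_space_def by blast
  obtain s where s: "s \<in> S" "x \<in> s" using assms(3) S(1) by auto
  have so: "openin X s" using s S(1) topology_generated_by_Basis by metis
  define N where "N = \<Inter>{V. openin X V \<and> x \<in> V}"
  define Vy where "Vy = (\<lambda>y. SOME V. openin X V \<and> x \<in> V \<and> y \<notin> V)"
  have Vy: "openin X (Vy y) \<and> x \<in> Vy y \<and> y \<notin> Vy y" if "y \<notin> N" for y
  proof -
    have "\<exists>V. openin X V \<and> x \<in> V \<and> y \<notin> V" using that unfolding N_def by blast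
    then show ?thesis unfolding Vy_def by (rule someI_ex)
  qed
  define F where "F = insert s (Vy ` (s - N))"
  have cF: "countable F" unfolding F_def using S(2) s(1) by auto
  have oF: "\<forall>U\<in>F. openin X U" unfolding F_def using so Vy by auto
  have "F \<noteq> {}" unfolding F_def by simp
  then have "openin X (\<Inter>F)" using assms(2) cF oF unfolding P_space_def by blast
  moreover have "\<Inter>F = s \<inter> N"
  proof
    show "\<Inter>F \<subseteq> s \<inter> N"
    proof
      fix z assume z: "z \<in> \<Inter>F"
      then have "z \<in> s" unfolding F_def by blast
      moreover have "z \<in> N"
      proof (rule ccontr)
        assume "z \<notin> N"
        then have "Vy z \<in> F" using \<open>z \<in> s\<close> unfolding F_def by blast
        then show False using z Vy[OF \<open>z \<notin> N\<close>] by blast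
      qed
      ultimately show "z \<in> s \<inter> N" by blast
    qed
    show "s \<inter> N \<subseteq> \<Inter>F"
    proof
      fix z assume z: "z \<in> s \<inter> N"
      have "z \<in> Vy y" if "y \<in> s - N" for y
      proof -
        have "openin X (Vy y) \<and> x \<in> Vy y" using Vy that by blast
        then show ?thesis using z unfolding N_def by blast
      qed
      then show "z \<in> \<Inter>F" unfolding F_def using z by blast
    qed
  qed
  moreover have "x \<in> N" unfolding N_def by blast
  moreover have "\<forall>V. openin X V \<and> x \<in> V \<longrightarrow> s \<inter> N \<subseteq> V" unfolding N_def by blast
  ultimately show ?thesis using s(2) by (intro exI[of _ "s \<inter> N"]) auto
qed


theorem corollary4p6:
  fixes X :: "'a topology"
  assumes "omega_type_space X" and "P_space X"
  shows "sober (Sigma_O X)"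
  unfolding sober_def
proof (intro conjI allI impI)
  show "t0_space (Sigma_O X)"
    unfolding t0_space_def
  proof (intro ballI impI)
    fix U V assume U: "U \<in> topspace (Sigma_O X)" and V: "V \<in> topspace (Sigma_O X)" and "U \<noteq> V"
    then have "\<not> U \<subseteq> V \<or> \<not> V \<subseteq> U" by blast
    then show "\<exists>W. openin (Sigma_O X) W \<and> (U \<notin> W) = (V \<in> W)"
    proof
      assume "\<not> U \<subseteq> V"
      then show ?thesis using U V notsub_scott[of X V] unfolding topspace_Sigma
        by (intro exI[of _ "{W. openin X W \<and> \<not> W \<subseteq> V}"]) (auto simp: openin_Sigma)
    next
      assume "\<not> V \<subseteq> U"
      then show ?thesis using U V notsub_scott[of X U] unfolding topspace_Sigma
        by (intro exI[of _ "{W. openin X W \<and> \<not> W \<subseteq> U}"]) (auto simp: openin_Sigma)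
    qed
  qed
next
  fix C assume C: "irreducible_closed (Sigma_O X) C"
  have cl: "closedin (Sigma_O X) C" and ne: "C \<noteq> {}" using C unfolding irreducible_closed_def by auto
  have Csub: "C \<subseteq> {U. openin X U}" using closedin_subset[OF cl] by (simp add: topspace_Sigma)
  have compl: "scott_open_opens X ({U. openin X U} - C)"
    using cl by (simp add: closedin_def topspace_Sigma openin_Sigma)
  have lower: "V \<in> C" if "U \<in> C" "openin X V" "V \<subseteq> U" for U V
  proof (rule ccontr)
    assume "V \<notin> C"
    then have "U \<in> {U. openin X U} - C" using scott_D2[OF compl, of V U] that Csub by blast
    then show False using that by blast
  qed
  have dsup: "\<Union>D \<in> C" if "directed_opens X D" "D \<subseteq> C" for D
  proof (rule ccontr)
    assume "\<Union>D \<notin> C"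
    moreover have "openin X (\<Union>D)" using that unfolding directed_opens_def by (auto intro: openin_Union)
    ultimately have "\<exists>d\<in>D. d \<in> ({U. openin X U} - C)" using scott_D3[OF compl that(1)] by blast
    then show False using that by blast
  qed
  have closedA: "closedin (Sigma_O X) (C - {V. openin X V \<and> F \<subseteq> V})" if "finite F" for F
  proof -
    have "openin (Sigma_O X) {V. openin X V \<and> F \<subseteq> V}" using finite_scott[OF that] by (simp add: openin_Sigma)
    then show ?thesis using cl by (simp add: closedin_diff)
  qed
  have fin: "finite F \<Longrightarrow> F \<subseteq> \<Union>C \<Longrightarrow> \<exists>c\<in>C. F \<subseteq> c" for F
  proof (induction F rule: finite_induct)
    case empty
    then show ?case using ne by blast
  next
    case (insert x F)
    then obtain c1 where c1: "c1 \<in> C" "F \<subseteq> c1" by blast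
    obtain c2 where c2: "c2 \<in> C" "x \<in> c2" using insert.prems by blast
    show ?case
    proof (rule ccontr)
      assume nc: "\<not> (\<exists>c\<in>C. insert x F \<subseteq> c)"
      have "C \<subseteq> (C - {V. openin X V \<and> F \<subseteq> V}) \<union> (C - {V. openin X V \<and> {x} \<subseteq> V})"
        using nc by blast
      then have "C \<subseteq> C - {V. openin X V \<and> F \<subseteq> V} \<or> C \<subseteq> C - {V. openin X V \<and> {x} \<subseteq> V}"
        using C closedA[OF insert.hyps(1)] closedA[of "{x}"] unfolding irreducible_closed_def by blast
      then show False using c1 c2 Csub by blast
    qed
  qed
  have Mex: "\<forall>x\<in>topspace X. \<exists>M. openin X M \<and> x \<in> M \<and> (\<forall>V. openin X V \<and> x \<in> V \<longrightarrow> M \<subseteq> V)"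
    using alexandrov[OF assms] by blast
  then obtain M where M: "\<And>x. x \<in> topspace X \<Longrightarrow> openin X (M x) \<and> x \<in> M x \<and> (\<forall>V. openin X V \<and> x \<in> V \<longrightarrow> M x \<subseteq> V)"
    by metis
  have UCtop: "\<Union>C \<subseteq> topspace X" using Csub openin_subset by blast
  define D where "D = {\<Union>(M ` F) | F. finite F \<and> F \<subseteq> \<Union>C}"
  have DC: "D \<subseteq> C"
  proof
    fix W assume "W \<in> D"
    then obtain F where F: "W = \<Union>(M ` F)" "finite F" "F \<subseteq> \<Union>C" unfolding D_def by blast
    then obtain c where c: "c \<in> C" "F \<subseteq> c" using fin by blast
    have "openin X W" using F M UCtop by (auto intro!: openin_Union)
    moreover have "W \<subseteq> c" using F c M UCtop Csub by blast
    ultimately show "W \<in> C" using lower c by blast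
  qed
  have dD: "directed_opens X D"
    unfolding directed_opens_def
  proof (intro conjI ballI)
    show "D \<noteq> {}" unfolding D_def by blast
    fix U assume "U \<in> D" then show "openin X U" using DC Csub by blast
  next
    fix U V assume "U \<in> D" "V \<in> D"
    then obtain F G where "U = \<Union>(M ` F)" "finite F" "F \<subseteq> \<Union>C" "V = \<Union>(M ` G)" "finite G" "G \<subseteq> \<Union>C"
      unfolding D_def by blast
    then show "\<exists>W\<in>D. U \<subseteq> W \<and> V \<subseteq> W" unfolding D_def
    proof (intro bexI[of _ "\<Union>(M ` (F \<union> G))"])
      show "\<Union>(M ` (F \<union> G)) \<in> {\<Union>(M ` F) | F. finite F \<and> F \<subseteq> \<Union>C}"
        using \<open>finite F\<close> \<open>finite G\<close> \<open>F \<subseteq> \<Union>C\<close> \<open>G \<subseteq> \<Union>C\<close> by blast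
    qed (use \<open>U = \<Union>(M ` F)\<close> \<open>V = \<Union>(M ` G)\<close> in blast)
  qed
  have "\<Union>D = \<Union>C"
  proof
    show "\<Union>D \<subseteq> \<Union>C" using DC by blast
    show "\<Union>C \<subseteq> \<Union>D"
    proof
      fix x assume x: "x \<in> \<Union>C"
      then have "M x \<in> D" unfolding D_def by (intro CollectI exI[of _ "{x}"]) auto
      then show "x \<in> \<Union>D" using M x UCtop by blast
    qed
  qed
  then have UC: "\<Union>C \<in> C" using dsup[OF dD DC] by simp
  have oUC: "openin X (\<Union>C)" using UC Csub by blast
  have "C = Sigma_O X closure_of {\<Union>C}"
    unfolding closure_single[OF oUC] using Csub lower UC by blast
  then show "\<exists>x\<in>topspace (Sigma_O X). C = Sigma_O X closure_of {x}"
    using oUC by (auto simp: topspace_Sigma)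
qed

end
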